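(* Let $\mathbf{B}\in\mathbb{R}^{n\times n}$ be a nonsingular matrix, $\mathcal L=\mathbf{B}\mathbb{Z}^n$, $s>0$, $\mathbf{c}\in\mathbb{R}^n$ and $\mathcal R>0$. Let $\mathcal X_{\mathcal R}:=\{\mathbf{x}\in\mathbb{Z}^n:\|\mathbf{B}\mathbf{x}-\mathbf{c}\|\le\mathcal R\}$, and assume $\mathcal X_{\mathcal R}\neq\emptyset$ (so that $Q(\mathcal X_{\mathcal R})>0$ and $\rho_{s,\mathbf c}(\mathbf B\mathcal X_{\mathcal R})>0$). Define the probability distributions on $\mathbb{Z}^n$ (both zero outside $\mathcal X_{\mathcal R}$) $$\pi_{\mathcal R}(\mathbf x)=\frac{\rho_{s,\mathbf c}(\mathbf B\mathbf x)}{\rho_{s,\mathbf c}(\mathbf B\mathcal X_{\mathcal R})},\qquad Q_{\mathcal R}(\mathbf x)=\frac{Q(\mathbf x)}{Q(\mathcal X_{\mathcal R})}\qquad(\mathbf x\in\mathcal X_{\mathcal R}),$$ where $Q(\mathcal X_{\mathcal R})=\sum_{\mathbf x\in\mathcal X_{\mathcal R}}Q(\mathbf x)$ and $\rho_{s,\mathbf c}(\mathbf B\mathcal X_{\mathcal R})=\sum_{\mathbf x\in\mathcal X_{\mathcal R}}\rho_{s,\mathbf c}(\mathbf B\mathbf x)$. Set $$\Delta_{\mathcal R}:=\frac{\rho_{s,\mathbf c}(\mathbf B\mathcal X_{\mathcal R})}{\prod_{i=1}^n\rho_{s_i}(\mathbb Z)},\qquad p_{\mathcal R}:=\frac{\Delta_{\mathcal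 R}}{Q(\mathcal X_{\mathcal R})}.$$ Then $p_{\mathcal R}\in(0,1]$ (equivalently $Q(\mathcal X_{\mathcal R})\ge\Delta_{\mathcal R}>0$), and for every $\mathbf x\in\mathbb Z^n$, $$Q_{\mathcal R}(\mathbf x)\ge p_{\mathcal R}\,\pi_{\mathcal R}(\mathbf x).$$
   Context: For $s>0$ and $c\in\mathbb{R}^k$, $\rho_{s,c}(y)=\exp(-\pi\|y-c\|^2/s^2)$ for $y\in\mathbb R^k$, $\rho_s:=\rho_{s,0}$, and for a countable set $S$, $\rho_{s,c}(S)=\sum_{y\in S}\rho_{s,c}(y)$. Let $\mathbf B=\mathbf Q\mathbf R$ be a QR decomposition ($\mathbf Q$ orthogonal, $\mathbf R=(r_{ij})$ upper triangular), $\mathbf c'=\mathbf Q^{\top}\mathbf c$. For $\mathbf x\in\mathbb Z^n$ and $i=1,\dots,n$, put $s_i:=s/|r_{ii}|$ and $\mu_i(\mathbf x_{>i}):=\big(c'_i-\sum_{j>i}r_{ij}x_j\big)/r_{ii}$. The Klein distribution on $\mathbb Z^n$ is $$Q(\mathbf x):=\prod_{i=1}^n\frac{\rho_{s_i,\mu_i(\mathbf x_{>i})}(x_i)}{\rho_{s_i,\mu_i(\mathbf x_{>i})}(\mathbb Z)}=\frac{\rho_{s,\mathbf c}(\mathbf B\mathbf x)}{\prod_{i=1}^n\rho_{s_i,\mu_i(\mathbf x_{>i})}(\mathbb Z)},$$ using the identity $\rho_{s,\mathbf c}(\mathbf B\mathbf x)=\prod_{i=1}^n\rho_{s_i,\mu_i(\mathbf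 x_{>i})}(x_i)$. *)

theory Defs
  imports "HOL-Analysis.Analysis"
begin

text \<open>Dimension n is the cardinality of a finite, well-ordered index type 'n;
  indices are ordered by the wellorder (playing the role of 1 < ... < n).\<close>

definition gauss :: "real \<Rightarrow> 'a::real_normed_vector \<Rightarrow> 'a \<Rightarrow> real" where
  "gauss s c y = exp (- pi * (norm (y - c))^2 / s^2)"

definition gaussZ :: "real \<Rightarrow> real \<Rightarrow> real" where
  "gaussZ s mu = infsum (\<lambda>k::int. gauss s mu (of_int k)) UNIV"

definition ivec :: "(int,'n::{finite,wellorder}) vec \<Rightarrow> (real,'n) vec" where
  "ivec x = (\<chi> i. of_int (x $ i))"

text \<open>mu_i(x_{>i}) for the QR decomposition B = Q R, c' = Q^T c\<close>
definition klein_mu :: "((real,'n::{finite,wellorder}) vec,'n) vec \<Rightarrow> ((real,'n) vec,'n) vec \<Rightarrow> (real,'n) vec \<Rightarrow> (int,'n) vec \<Rightarrow> 'n \<Rightarrow> real" where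
  "klein_mu Qm R c x i =
     ((transpose Qm *v c) $ i - (\<Sum>j\<in>{j. i < j}. R $ i $ j * of_int (x $ j))) / R $ i $ i"

definition klein :: "((real,'n::{finite,wellorder}) vec,'n) vec \<Rightarrow> ((real,'n) vec,'n) vec \<Rightarrow> real \<Rightarrow> (real,'n) vec \<Rightarrow> (int,'n) vec \<Rightarrow> real" where
  "klein Qm R s c x =
     (\<Prod>i\<in>(UNIV::'n set).
        gauss (s / \<bar>R $ i $ i\<bar>) (klein_mu Qm R c x i) (of_int (x $ i))
        / gaussZ (s / \<bar>R $ i $ i\<bar>) (klein_mu Qm R c x i))"

definition lat_ball :: "((real,'n::{finite,wellorder}) vec,'n) vec \<Rightarrow> (real,'n) vec \<Rightarrow> real \<Rightarrow> ((int,'n) vec) set" where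
  "lat_ball B c Rad = {x. norm (B *v ivec x - c) \<le> Rad}"

definition pi_R :: "((real,'n::{finite,wellorder}) vec,'n) vec \<Rightarrow> real \<Rightarrow> (real,'n) vec \<Rightarrow> real \<Rightarrow> (int,'n) vec \<Rightarrow> real" where
  "pi_R B s c Rad x =
     (if x \<in> lat_ball B c Rad
      then gauss s c (B *v ivec x) / (\<Sum>y\<in>lat_ball B c Rad. gauss s c (B *v ivec y))
      else 0)"

definition Q_R :: "((real,'n::{finite,wellorder}) vec,'n) vec \<Rightarrow> ((real,'n) vec,'n) vec \<Rightarrow> ((real,'n) vec,'n) vec \<Rightarrow> real \<Rightarrow> (real,'n) vec \<Rightarrow> real \<Rightarrow> (int,'n) vec \<Rightarrow> real" where
  "Q_R B Qm R s c Rad x =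
     (if x \<in> lat_ball B c Rad
      then klein Qm R s c x / (\<Sum>y\<in>lat_ball B c Rad. klein Qm R s c y)
      else 0)"

definition Delta_R :: "((real,'n::{finite,wellorder}) vec,'n) vec \<Rightarrow> ((real,'n) vec,'n) vec \<Rightarrow> real \<Rightarrow> (real,'n) vec \<Rightarrow> real \<Rightarrow> real" where
  "Delta_R B R s c Rad =
     (\<Sum>y\<in>lat_ball B c Rad. gauss s c (B *v ivec y))
     / (\<Prod>i\<in>(UNIV::'n set). gaussZ (s / \<bar>R $ i $ i\<bar>) 0)"

definition p_R :: "((real,'n::{finite,wellorder}) vec,'n) vec \<Rightarrow> ((real,'n) vec,'n) vec \<Rightarrow> ((real,'n) vec,'n) vec \<Rightarrow> real \<Rightarrow> (real,'n) vec \<Rightarrow> real \<Rightarrow> real" where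
  "p_R B Qm R s c Rad = Delta_R B R s c Rad / (\<Sum>y\<in>lat_ball B c Rad. klein Qm R s c y)"

end

theory Submission
  imports Defs
begin


lemma geom_int_summable:
  fixes r :: real assumes r0: "0 \<le> r" and r1: "r < 1"
  shows "(\<lambda>k::int. r ^ nat \<bar>k\<bar>) summable_on UNIV"
proof -
  have U: "(UNIV::int set) = range int \<union> range (\<lambda>n. - int (Suc n))"
  proof (rule set_eqI, rule iffI)
    fix x :: int
    show "x \<in> range int \<union> range (\<lambda>n. - int (Suc n))"
    proof (cases "0 \<le> x")
      case True
      then have "x = int (nat x)" by simp
      then show ?thesis by blast
    next
      case False
      then have "x = - int (Suc (nat (- x - 1)))" by simp
      then show ?thesis by blast
    qed
  qed simp
  have s1: "(\<lambda>n. r ^ n) summable_on (UNIV::nat set)"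
    using r0 r1 by (subst summable_on_UNIV_nonneg_real_iff) (auto intro: summable_geometric)
  have s2: "(\<lambda>n. r * r ^ n) summable_on (UNIV::nat set)"
    using r0 r1 by (subst summable_on_UNIV_nonneg_real_iff) (auto intro!: summable_mult summable_geometric)
  have a: "(\<lambda>k::int. r ^ nat \<bar>k\<bar>) summable_on range int"
    by (subst summable_on_reindex) (auto simp: o_def s1)
  have b: "(\<lambda>k::int. r ^ nat \<bar>k\<bar>) summable_on range (\<lambda>n. - int (Suc n))"
    by (subst summable_on_reindex) (auto simp: o_def inj_on_def s2 simp del: of_nat_Suc)
  show ?thesis unfolding U
    by (rule summable_on_Un_disjoint[OF a b]) auto
qed

lemma gauss_int_summable:
  fixes a c :: real assumes a: "0 < a"
  shows "(\<lambda>k::int. exp (- a * (of_int k - c)^2)) summable_on UNIV"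
proof (rule summable_on_comparison_test)
  show "(\<lambda>k::int. exp (a * c^2) * exp (-a/2) ^ nat \<bar>k\<bar>) summable_on UNIV"
    by (rule summable_on_cmult_right, rule geom_int_summable) (use a in auto)
  fix k :: int
  have "of_int \<bar>k\<bar> \<le> (of_int k :: real)^2"
  proof -
    have "\<bar>k\<bar> \<le> k^2"
    proof (cases "k = 0")
      case False
      then have "\<bar>k\<bar> * 1 \<le> \<bar>k\<bar> * \<bar>k\<bar>" by (intro mult_left_mono) auto
      then show ?thesis by (simp add: power2_eq_square abs_mult_self_eq)
    qed simp
    then show ?thesis by (metis of_int_le_iff of_int_power)
  qed
  moreover have "2 * (of_int k - c)^2 + 2 * c^2 - (of_int k::real)^2 = (of_int k - 2*c)^2"
    by (simp add: power2_eq_square algebra_simps)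
  moreover have "0 \<le> (of_int k - 2*c)^2" by simp
  ultimately have "of_int \<bar>k\<bar> / 2 - c^2 \<le> (of_int k - c)^2" by linarith
  then have "a * (of_int \<bar>k\<bar> / 2 - c^2) \<le> a * (of_int k - c)^2"
    using a by (intro mult_left_mono) auto
  then have "- a * (of_int k - c)^2 \<le> a * c^2 + (-a/2) * of_int \<bar>k\<bar>"
    by (simp add: algebra_simps)
  then have "exp (- a * (of_int k - c)^2) \<le> exp (a * c^2 + (-a/2) * real (nat \<bar>k\<bar>))"
    by simp
  also have "\<dots> = exp (a * c^2) * exp (-a/2) ^ nat \<bar>k\<bar>"
    by (metis exp_add exp_of_nat_mult mult.commute)
  finally show "exp (- a * (of_int k - c)^2) \<le> exp (a * c^2) * exp (-a/2) ^ nat \<bar>k\<bar>" .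
qed simp



lemma gauss_psd:
  fixes a :: real and F :: "'i set" and u v :: "'i \<Rightarrow> real"
  assumes a: "0 \<le> a" and F: "finite F"
  shows "0 \<le> (\<Sum>m\<in>F. \<Sum>m'\<in>F. exp (- a * (u m - u m')^2) - exp (- a * (u m - v m')^2)
              - exp (- a * (v m - u m')^2) + exp (- a * (v m - v m')^2))"
proof -
  define w where "w n x = exp (- a * x^2) * x^n" for n :: nat and x :: real
  define cc where "cc n = (2*a)^n / fact n" for n :: nat
  define T where "T n x y = cc n * w n x * w n y" for n x y
  have key: "(\<lambda>n. T n x y) sums exp (- a * (x - y)^2)" for x y
  proof -
    have "(\<lambda>n. exp (- a * x^2) * exp (- a * y^2) * ((2*a*x*y)^n /\<^sub>R fact n)) sums
          (exp (- a * x^2) * exp (- a * y^2) * exp (2*a*x*y))"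
      by (rule sums_mult, rule exp_converges)
    moreover have "exp (- a * x^2) * exp (- a * y^2) * exp (2*a*x*y) = exp (- a * (x - y)^2)"
      by (simp add: exp_add[symmetric] power2_eq_square algebra_simps)
    moreover have "exp (- a * x^2) * exp (- a * y^2) * ((2*a*x*y)^n /\<^sub>R fact n) = T n x y" for n
      by (simp add: T_def w_def cc_def power_mult_distrib divide_inverse algebra_simps)
    ultimately show ?thesis by simp
  qed
  define C where "C n m m' = T n (u m) (u m') - T n (u m) (v m') - T n (v m) (u m') + T n (v m) (v m')" for n m m'
  have "(\<lambda>n. C n m m') sums (exp (- a * (u m - u m')^2) - exp (- a * (u m - v m')^2)
              - exp (- a * (v m - u m')^2) + exp (- a * (v m - v m')^2))" for m m'
    unfolding C_def by (intro sums_add sums_diff key)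
  then have S: "(\<lambda>n. \<Sum>m\<in>F. \<Sum>m'\<in>F. C n m m') sums (\<Sum>m\<in>F. \<Sum>m'\<in>F. exp (- a * (u m - u m')^2) - exp (- a * (u m - v m')^2)
              - exp (- a * (v m - u m')^2) + exp (- a * (v m - v m')^2))"
    by (intro sums_sum)
  have nn: "0 \<le> (\<Sum>m\<in>F. \<Sum>m'\<in>F. C n m m')" for n
  proof -
    define X where "X m = w n (u m) - w n (v m)" for m
    have "C n m m' = cc n * (X m * X m')" for m m'
      by (simp add: C_def T_def X_def algebra_simps)
    then have "(\<Sum>m\<in>F. \<Sum>m'\<in>F. C n m m') = cc n * (\<Sum>m\<in>F. \<Sum>m'\<in>F. X m * X m')"
      by (simp add: sum_distrib_left)
    also have "\<dots> = cc n * (\<Sum>m\<in>F. X m)^2"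
      by (simp only: power2_eq_square sum_product)
    finally have "(\<Sum>m\<in>F. \<Sum>m'\<in>F. C n m m') = cc n * (\<Sum>m\<in>F. X m)^2" .
    moreover have "0 \<le> cc n" using a by (simp add: cc_def)
    ultimately show ?thesis by simp
  qed
  show ?thesis
    using sums_le[OF nn sums_zero S] by simp
qed



lemma shift_bij: "bij_betw (\<lambda>k::int. k - m) UNIV UNIV"
  by (rule bij_betwI[where g="\<lambda>k. k + m"]) auto

lemma theta0_shift:
  fixes a :: real assumes a: "0 < a"
  shows "infsum (\<lambda>k::int. exp (- a * (of_int k - of_int m)^2)) UNIV
       = infsum (\<lambda>k::int. exp (- a * (of_int k - 0)^2)) UNIV"
proof -
  have "infsum (\<lambda>k::int. (\<lambda>j. exp (- a * (of_int j - 0)^2)) (k - m)) UNIV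
       = infsum (\<lambda>k::int. exp (- a * (of_int k - 0)^2)) UNIV"
    by (rule infsum_reindex_bij_betw[OF shift_bij])
  then show ?thesis by simp
qed

lemma finsum_le_theta0:
  fixes a :: real assumes a: "0 < a" and F: "finite F"
  shows "(\<Sum>m\<in>F. exp (- a * (of_int m - of_int m')^2)) \<le> infsum (\<lambda>k::int. exp (- a * (of_int k - 0)^2)) UNIV"
proof -
  have "(\<Sum>m\<in>F. exp (- a * (of_int m - of_int m')^2)) \<le> infsum (\<lambda>k::int. exp (- a * (of_int k - of_int m')^2)) UNIV"
    by (rule finite_sum_le_infsum[OF gauss_int_summable[OF a] F]) auto
  then show ?thesis using theta0_shift[OF a] by simp
qed

lemma theta_le:
  fixes a c :: real assumes a: "0 < a"
  shows "infsum (\<lambda>k::int. exp (- a * (of_int k - c)^2)) UNIV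
       \<le> infsum (\<lambda>k::int. exp (- a * (of_int k - 0)^2)) UNIV"
proof (rule infsum_le_finite_sums[OF gauss_int_summable[OF a]])
  define T0 where "T0 = infsum (\<lambda>k::int. exp (- a * (of_int k - 0)^2)) UNIV"
  define g where "g t = exp (- a * t^2)" for t :: real
  fix F :: "int set" assume F: "finite F"
  define M where "M = (\<Sum>k\<in>F. \<bar>k\<bar>)"
  have M0: "0 \<le> M" unfolding M_def by (simp add: sum_nonneg)
  have FM: "F \<subseteq> {-M..M}"
  proof
    fix k assume "k \<in> F"
    then have "\<bar>k\<bar> \<le> M" unfolding M_def using F by (intro member_le_sum) auto
    then show "k \<in> {-M..M}" by auto
  qed
  define \<sigma> where "\<sigma> = (\<Sum>d\<in>F. g (of_int d - c))"
  have key: "real_of_int (2*(N-M)+1) * \<sigma> \<le> real_of_int (2*N+1) * T0" if NM: "M \<le> N" for N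
  proof -
    define S where "S N = {-N..N}" for N :: int
    define P where "P = (\<Sum>m'\<in>S N. \<Sum>m\<in>S N. g (of_int m - of_int m' - c))"
    define A where "A = (\<Sum>m'\<in>S N. \<Sum>m\<in>S N. g (of_int m - of_int m'))"
    have inner: "\<sigma> \<le> (\<Sum>m\<in>S N. g (of_int m - of_int m' - c))" if m': "m' \<in> S (N-M)" for m'
    proof -
      have "\<sigma> = (\<Sum>m\<in>(\<lambda>d. d + m') ` F. g (of_int m - of_int m' - c))"
        unfolding \<sigma>_def by (subst sum.reindex) (auto simp: inj_on_def)
      also have "\<dots> \<le> (\<Sum>m\<in>S N. g (of_int m - of_int m' - c))"
      proof (rule sum_mono2)
        show "(\<lambda>d. d + m') ` F \<subseteq> S N" using FM m' unfolding S_def by auto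
      qed (auto simp: S_def g_def)
      finally show ?thesis .
    qed
    have "real_of_int (2*(N-M)+1) * \<sigma> = (\<Sum>m'\<in>S (N-M). \<sigma>)"
      using NM M0 by (simp add: S_def)
    also have "\<dots> \<le> (\<Sum>m'\<in>S (N-M). \<Sum>m\<in>S N. g (of_int m - of_int m' - c))"
      by (rule sum_mono) (rule inner)
    also have "\<dots> \<le> P"
      unfolding P_def
    proof (rule sum_mono2)
      show "S (N - M) \<subseteq> S N" using M0 by (auto simp: S_def)
    qed (auto simp: S_def g_def intro: sum_nonneg)
    also have "P \<le> A"
    proof -
      have psd: "0 \<le> (\<Sum>m\<in>S N. \<Sum>m'\<in>S N. g (of_int m - of_int m') - g (of_int m - (of_int m' + c))
              - g ((of_int m + c) - of_int m') + g ((of_int m + c) - (of_int m' + c)))"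
        unfolding g_def by (rule gauss_psd) (use a in \<open>auto simp: S_def\<close>)
      have e1: "g ((of_int m + c) - of_int m') = g (of_int m' - of_int m - c)" for m m' :: int
        unfolding g_def by (simp add: power2_eq_square algebra_simps)
      have e2: "g (of_int m - (of_int m' + c)) = g (of_int m - of_int m' - c)" for m m' :: int
        by (simp add: algebra_simps)
      have e3: "g ((of_int m + c) - (of_int m' + c)) = g (of_int m - of_int m')" for m m' :: int
        by (simp add: algebra_simps)
      have "(\<Sum>m\<in>S N. \<Sum>m'\<in>S N. g (of_int m - of_int m') - g (of_int m - (of_int m' + c))
              - g ((of_int m + c) - of_int m') + g ((of_int m + c) - (of_int m' + c)))
          = (\<Sum>m\<in>S N. \<Sum>m'\<in>S N. g (of_int m - of_int m')) - (\<Sum>m\<in>S N. \<Sum>m'\<in>S N. g (of_int m - of_int m' - c))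
            - (\<Sum>m\<in>S N. \<Sum>m'\<in>S N. g (of_int m' - of_int m - c)) + (\<Sum>m\<in>S N. \<Sum>m'\<in>S N. g (of_int m - of_int m'))"
        by (simp only: e1 e2 e3 sum.distrib sum_subtractf)
      also have "(\<Sum>m\<in>S N. \<Sum>m'\<in>S N. g (of_int m - of_int m')) = A"
        unfolding A_def by (rule sum.swap)
      also have "(\<Sum>m\<in>S N. \<Sum>m'\<in>S N. g (of_int m - of_int m' - c)) = P"
        unfolding P_def by (rule sum.swap)
      also have "(\<Sum>m\<in>S N. \<Sum>m'\<in>S N. g (of_int m' - of_int m - c)) = P"
        unfolding P_def by simp
      finally show ?thesis using psd by simp
    qed
    also have "A \<le> (\<Sum>m'\<in>S N. T0)"
      unfolding A_def T0_def g_def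
      by (rule sum_mono, rule finsum_le_theta0[OF a]) (simp add: S_def)
    also have "\<dots> = real_of_int (2*N+1) * T0"
      using NM M0 by (simp add: S_def)
    finally show ?thesis .
  qed
  show "sum (\<lambda>k. exp (- a * (of_int k - c)^2)) F \<le> T0"
  proof (rule ccontr)
    assume "\<not> ?thesis"
    then have lt: "T0 < \<sigma>" unfolding \<sigma>_def g_def by simp
    obtain n :: nat where n: "2 * of_int M * \<sigma> / (\<sigma> - T0) < real n"
      using reals_Archimedean2 by blast
    then have "2 * of_int M * \<sigma> < real n * (\<sigma> - T0)"
      using lt by (simp add: pos_divide_less_eq)
    also have "\<dots> \<le> real_of_int (2*(M + int n)+1) * (\<sigma> - T0)"
      using lt M0 by (intro mult_right_mono) auto
    finally have "2 * of_int M * \<sigma> < real_of_int (2*(M + int n)+1) * (\<sigma> - T0)" .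
    moreover have "real_of_int (2*((M + int n)-M)+1) * \<sigma> \<le> real_of_int (2*(M + int n)+1) * T0"
      by (rule key) simp
    ultimately show False by (simp add: algebra_simps)
  qed
qed



lemma gaussZ_eq:
  assumes "s > 0"
  shows "gaussZ s mu = infsum (\<lambda>k::int. exp (- (pi / s^2) * (of_int k - mu)^2)) UNIV"
  unfolding gaussZ_def gauss_def by (rule infsum_cong) (simp add: power2_abs)

lemma gaussZ_le:
  assumes s: "s > 0"
  shows "gaussZ s mu \<le> gaussZ s 0"
proof -
  have a: "0 < pi / s^2" using s by simp
  show ?thesis
    using theta_le[OF a, of mu] unfolding gaussZ_eq[OF s] by simp
qed

lemma gaussZ_pos:
  assumes s: "s > 0"
  shows "0 < gaussZ s mu"
proof -
  have a: "0 < pi / s^2" using s by simp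
  have "(\<Sum>k\<in>{0::int}. exp (- (pi / s^2) * (of_int k - mu)^2))
     \<le> infsum (\<lambda>k::int. exp (- (pi / s^2) * (of_int k - mu)^2)) UNIV"
    by (rule finite_sum_le_infsum[OF gauss_int_summable[OF a]]) auto
  moreover have "0 < (\<Sum>k\<in>{0::int}. exp (- (pi / s^2) * (of_int k - mu)^2))" by simp
  ultimately show ?thesis unfolding gaussZ_eq[OF s] by linarith
qed

lemma lat_ball_finite:
  fixes B :: "((real,'n::{finite,wellorder}) vec,'n) vec"
  assumes "invertible B"
  shows "finite (lat_ball B c Rad)"
proof -
  obtain Bi where Bi: "Bi ** B = mat 1" using assms unfolding invertible_def by blast
  obtain K where K: "\<And>v. norm (Bi *v v) \<le> K * norm v"
    using linear_bounded[OF matrix_vector_mul_linear[of Bi]] by blast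
  define L where "L = ceiling (K * (norm c + \<bar>Rad\<bar>))"
  define S where "S = {-L..L}"
  have sub: "lat_ball B c Rad \<subseteq> vec_lambda ` (Pi\<^sub>E UNIV (\<lambda>_. S))"
  proof
    fix x assume x: "x \<in> lat_ball B c Rad"
    have nb: "norm (B *v ivec x) \<le> norm c + \<bar>Rad\<bar>"
      using x norm_triangle_ineq2[of "B *v ivec x" c] unfolding lat_ball_def by auto
    have K0: "0 \<le> K"
    proof -
      have "norm (Bi *v (B *v ivec x)) \<le> K * norm (B *v ivec x)" by (rule K)
      show ?thesis
      proof (rule ccontr)
        assume "\<not> 0 \<le> K"
        then have "K * norm (axis undefined (1::real)) < 0" by (simp add: mult_neg_pos)
        then show False using K[of "axis undefined 1"] by (smt (verit) norm_ge_zero)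
      qed
    qed
    have "ivec x = Bi *v (B *v ivec x)" by (simp add: matrix_vector_mul_assoc Bi)
    then have "norm (ivec x) \<le> K * (norm c + \<bar>Rad\<bar>)"
      using K[of "B *v ivec x"] nb K0 by (smt (verit) mult_left_mono)
    then have "\<bar>of_int (x $ i)\<bar> \<le> K * (norm c + \<bar>Rad\<bar>)" for i
      using component_le_norm_cart[of "ivec x" i] by (simp add: ivec_def)
    then have "x $ i \<in> S" for i
    proof -
      have "of_int \<bar>x $ i\<bar> \<le> K * (norm c + \<bar>Rad\<bar>)"
        using \<open>\<And>i. \<bar>of_int (x $ i)\<bar> \<le> K * (norm c + \<bar>Rad\<bar>)\<close>[of i] by simp
      then have "\<bar>x $ i\<bar> \<le> L" unfolding L_def by (metis ceiling_mono ceiling_of_int)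
      then show ?thesis unfolding S_def by (auto simp: abs_le_iff)
    qed
    then show "x \<in> vec_lambda ` (Pi\<^sub>E UNIV (\<lambda>_. S))"
      by (intro image_eqI[where x="vec_nth x"]) auto
  qed
  show ?thesis
    by (rule finite_subset[OF sub], rule finite_imageI, rule finite_PiE) (auto simp: S_def)
qed



lemma row_split:
  fixes R :: "((real,'n::{finite,wellorder}) vec,'n) vec"
  assumes up: "\<forall>i j. j < i \<longrightarrow> R $ i $ j = 0"
  shows "(R *v v) $ i = R $ i $ i * v $ i + (\<Sum>j\<in>{j. i < j}. R $ i $ j * v $ j)"
proof -
  have "(R *v v) $ i = (\<Sum>j\<in>UNIV. R $ i $ j * v $ j)"
    by (simp add: matrix_vector_mult_def)
  also have "\<dots> = (\<Sum>j\<in>insert i {j. i < j}. R $ i $ j * v $ j)"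
  proof (rule sum.mono_neutral_right)
    show "\<forall>j\<in>UNIV - insert i {j. i < j}. R $ i $ j * v $ j = 0"
      using up by (auto simp: not_less_iff_gr_or_eq)
  qed auto
  also have "\<dots> = R $ i $ i * v $ i + (\<Sum>j\<in>{j. i < j}. R $ i $ j * v $ j)"
    by (subst sum.insert) auto
  finally show ?thesis .
qed

lemma gauss_factor:
  fixes B Qm R :: "((real,'n::{finite,wellorder}) vec,'n) vec"
  assumes orth: "orthogonal_matrix Qm"
    and up: "\<forall>i j. j < i \<longrightarrow> R $ i $ j = 0"
    and BQR: "B = Qm ** R"
    and s: "s > 0" and diag: "\<And>i. R $ i $ i \<noteq> 0"
  shows "gauss s c (B *v ivec x) =
     (\<Prod>i\<in>UNIV. gauss (s / \<bar>R $ i $ i\<bar>) (klein_mu Qm R c x i) (of_int (x $ i)))"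
proof -
  define y where "y = R *v ivec x - transpose Qm *v c"
  have "B *v ivec x - c = Qm *v y"
  proof -
    have QQ: "Qm ** transpose Qm = mat 1" using orth by (simp add: orthogonal_matrix_def)
    have "Qm *v (transpose Qm *v c) = c"
      by (simp only: matrix_vector_mul_assoc QQ matrix_vector_mul_lid)
    then show ?thesis
      by (simp add: y_def BQR matrix_vector_mult_diff_distrib matrix_vector_mul_assoc)
  qed
  moreover have "norm (Qm *v y) = norm y"
  proof -
    have "orthogonal_transformation (\<lambda>v. Qm *v v)"
      using orth by (simp add: orthogonal_transformation_matrix)
    then show ?thesis by (simp add: orthogonal_transformation_norm)
  qed
  moreover have "(norm y)^2 = y \<bullet> y" by (rule power2_norm_eq_inner)
  moreover have "y \<bullet> y = (\<Sum>i\<in>UNIV. (y $ i)^2)" by (simp add: inner_vec_def power2_eq_square)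
  ultimately have n: "(norm (B *v ivec x - c))^2 = (\<Sum>i\<in>UNIV. (y $ i)^2)"
    by simp
  have comp: "y $ i = R $ i $ i * (of_int (x $ i) - klein_mu Qm R c x i)" for i
  proof -
    have "y $ i = R $ i $ i * of_int (x $ i) + (\<Sum>j\<in>{j. i < j}. R $ i $ j * of_int (x $ j)) - (transpose Qm *v c) $ i"
      unfolding y_def using row_split[OF up, of "ivec x" i] by (simp add: ivec_def)
    also have "\<dots> = R $ i $ i * (of_int (x $ i) - klein_mu Qm R c x i)"
      using diag[of i] by (simp add: klein_mu_def field_simps)
    finally show ?thesis .
  qed
  have fac: "gauss (s / \<bar>R $ i $ i\<bar>) (klein_mu Qm R c x i) (of_int (x $ i)) = exp (- pi * (y $ i)^2 / s^2)" for i
  proof -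
    have y2: "(y $ i)^2 = (R $ i $ i)^2 * (of_int (x $ i) - klein_mu Qm R c x i)^2"
      by (simp add: comp power_mult_distrib)
    have s2: "(s / \<bar>R $ i $ i\<bar>)^2 = s^2 / (R $ i $ i)^2" by (simp add: power_divide power2_abs)
    show ?thesis unfolding gauss_def y2 s2 using diag[of i] s
      by (simp add: power2_abs field_simps)
  qed
  have "gauss s c (B *v ivec x) = exp (\<Sum>i\<in>UNIV. - pi * (y $ i)^2 / s^2)"
    unfolding gauss_def n by (simp add: sum_divide_distrib sum_negf sum_distrib_left)
  also have "\<dots> = (\<Prod>i\<in>UNIV. exp (- pi * (y $ i)^2 / s^2))"
    by (rule exp_sum) simp
  finally show ?thesis by (simp add: fac)
qed



theorem proposition1:
  fixes B Qm R :: "((real,'n::{finite,wellorder}) vec,'n) vec"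
    and s Rad :: real and c :: "(real,'n) vec"
  assumes "invertible B"
    and "orthogonal_matrix Qm"
    and "\<forall>i j. j < i \<longrightarrow> R $ i $ j = 0"
    and "B = Qm ** R"
    and "s > 0" and "Rad > 0"
    and "lat_ball B c Rad \<noteq> {}"
  shows "0 < p_R B Qm R s c Rad \<and> p_R B Qm R s c Rad \<le> 1
     \<and> (\<forall>x. Q_R B Qm R s c Rad x \<ge> p_R B Qm R s c Rad * pi_R B s c Rad x)"
proof -
  note inv = assms(1) and orth = assms(2) and up = assms(3) and BQR = assms(4)
    and s = assms(5) and ne = assms(7)
  have "det B \<noteq> 0" using inv by (simp add: invertible_det_nz)
  moreover have "det B = det Qm * det R" using BQR by (simp add: det_mul)
  moreover have "det R = (\<Prod>i\<in>UNIV. R $ i $ i)"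
    by (rule det_upperdiagonal) (use up in auto)
  ultimately have diag: "R $ i $ i \<noteq> 0" for i by auto
  have si: "0 < s / \<bar>R $ i $ i\<bar>" for i using diag[of i] s by simp
  define X where "X = lat_ball B c Rad"
  have fin: "finite X" unfolding X_def by (rule lat_ball_finite[OF inv])
  have Xne: "X \<noteq> {}" using ne X_def by simp
  define rho where "rho x = gauss s c (B *v ivec x)" for x
  have rho_pos: "0 < rho x" for x by (simp add: rho_def gauss_def)
  define Z where "Z = (\<Prod>i\<in>(UNIV::'n set). gaussZ (s / \<bar>R $ i $ i\<bar>) 0)"
  have Zpos: "0 < Z" unfolding Z_def by (rule prod_pos) (use gaussZ_pos[OF si] in auto)
  define D where "D x = (\<Prod>i\<in>(UNIV::'n set). gaussZ (s / \<bar>R $ i $ i\<bar>) (klein_mu Qm R c x i))" for x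
  have Dpos: "0 < D x" for x unfolding D_def by (rule prod_pos) (use gaussZ_pos[OF si] in auto)
  have DZ: "D x \<le> Z" for x unfolding D_def Z_def
    by (rule prod_mono) (use gaussZ_pos[OF si] gaussZ_le[OF si] in \<open>auto intro: less_imp_le\<close>)
  have kl: "klein Qm R s c x = rho x / D x" for x
    unfolding klein_def rho_def D_def
    by (simp add: prod_dividef gauss_factor[OF orth up BQR s diag])
  have kl_ge: "rho x / Z \<le> klein Qm R s c x" for x
    unfolding kl using Dpos[of x] DZ[of x] rho_pos[of x]
    by (intro divide_left_mono) (auto intro: less_imp_le)
  define SQ where "SQ = (\<Sum>y\<in>X. klein Qm R s c y)"
  define SR where "SR = (\<Sum>y\<in>X. rho y)"
  have SRpos: "0 < SR" unfolding SR_def using fin Xne rho_pos by (intro sum_pos) auto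
  have Delta: "Delta_R B R s c Rad = SR / Z"
    unfolding Delta_R_def SR_def X_def rho_def Z_def by simp
  have "SR / Z = (\<Sum>y\<in>X. rho y / Z)" unfolding SR_def by (simp add: sum_divide_distrib)
  also have "\<dots> \<le> SQ" unfolding SQ_def by (rule sum_mono) (rule kl_ge)
  finally have DSQ: "SR / Z \<le> SQ" .
  have DeltaPos: "0 < SR / Z" using SRpos Zpos by simp
  then have SQpos: "0 < SQ" using DSQ by linarith
  have p: "p_R B Qm R s c Rad = (SR / Z) / SQ"
    unfolding p_R_def Delta SQ_def X_def by simp
  have "0 < p_R B Qm R s c Rad" unfolding p using DeltaPos SQpos by (rule divide_pos_pos)
  moreover have "p_R B Qm R s c Rad \<le> 1" unfolding p using DSQ SQpos by (simp only: divide_le_eq_1_pos)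
  moreover have "Q_R B Qm R s c Rad x \<ge> p_R B Qm R s c Rad * pi_R B s c Rad x" for x
  proof (cases "x \<in> X")
    case True
    have Q: "Q_R B Qm R s c Rad x = klein Qm R s c x / SQ"
      using True unfolding Q_R_def SQ_def X_def by simp
    have P: "pi_R B s c Rad x = rho x / SR"
      using True unfolding pi_R_def SR_def X_def rho_def by simp
    have "p_R B Qm R s c Rad * pi_R B s c Rad x = (rho x / Z) / SQ"
      unfolding p P using SRpos by simp
    also have "\<dots> \<le> klein Qm R s c x / SQ"
      using kl_ge[of x] SQpos by (intro divide_right_mono) auto
    finally show ?thesis unfolding Q .
  next
    case False
    then show ?thesis unfolding Q_R_def pi_R_def X_def by simp
  qed
  ultimately show ?thesis by blast
qed


end
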